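(* Let $\mathcal{E}^*$ be any function mapping pairs (an $\mathcal{ALC}$-formula, an interpretation) to $\mathcal{ALC}$-formulae, let $\varphi$ be an $\mathcal{ALC}$-formula and $M$ an interpretation. If $\mathrm{Mod}(\mathcal{E}^*(\varphi,M))=\mathrm{Mod}(\varphi)\cup[M]_\varphi$, then (i) $\mathcal{E}^*(\varphi,M)\equiv\varphi$ if $M\models\varphi$, and (ii) $\mathcal{E}^*(\varphi,M)\equiv\varphi\vee\bigwedge\mathrm{lit}(f)$ if $M\not\models\varphi$, where $\mathrm{qm}(\neg\varphi,M)=(T,o,f)$.
   Context: $\mathcal{ALC}$ concepts: $C::=A\mid\neg C\mid(C\sqcap C)\mid\exists r.C$. $\mathcal{ALC}$-formulae: $\phi::=\alpha\mid\neg\phi\mid(\phi\wedge\phi)$, atomic $\alpha::=C(a)\mid r(a,b)\mid(C=\top)$; $\neg\neg\psi$ identified with $\psi$; $\vee$ usual abbreviation. A literal is an atomic formula or its negation. Interpretations: countable nonempty domain, standard semantics. $\mathrm{Mod}(\varphi)$: interpretations satisfying $\varphi$; $\equiv$: same models. $\mathrm{Sub}(\alpha)=\mathrm{Sub}(\neg\alpha)=\{\alpha,\neg\alpha\}$ for atomic $\alpha$; $\mathrm{Sub}(\psi\wedge\psi')=\mathrm{Sub}(\neg(\psi\wedge\psi'))=\{\psi\wedge\psi',\neg(\psi\wedge\psi')\}\cup\mathrm{Sub}(\psi)\cup\mathrm{Sub}(\psi')$. $\mathrm{con}(\varphi)$: smallest set of concepts containing $C$ whenever $(C=\top)$ or $C(a)$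 lies in $\mathrm{Sub}(\varphi)$, closed under subconcepts of $\sqcap$, $\exists r.\cdot$, and under single negation. For an interpretation $I$, $\mathrm{qm}(\varphi,I)=(T,o,f)$ with $T=\{c(x)\mid x\in\Delta^I\}$, $c(x)=\{C\in\mathrm{con}(\varphi)\mid x\in C^I\}$, $o(a)=c(a^I)$, $f=\{\psi\in\mathrm{Sub}(\varphi)\mid I\models\psi\}$. $\mathrm{lit}(f)$: literals in $f$. $\mathcal{L}_{lit}(\varphi)$: Boolean combinations of atomic formulae occurring in $\varphi$; $M'\equiv_\varphi M$ iff they satisfy the same formulae of $\mathcal{L}_{lit}(\varphi)$; $[M]_\varphi=\{M'\mid M'\equiv_\varphi M\}$. *)

theory Defs
  imports Main "HOL-Library.Countable_Set"
begin

datatype ('c, 'r) concept =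
    CAtom 'c
  | CNot "('c, 'r) concept"
  | CAnd "('c, 'r) concept" "('c, 'r) concept"
  | CEx 'r "('c, 'r) concept"

datatype ('c, 'r, 'i) formula =
    FCAss "('c, 'r) concept" 'i
  | FRAss 'r 'i 'i
  | FTBox "('c, 'r) concept"             (* C = top *)
  | FNot "('c, 'r, 'i) formula"
  | FAnd "('c, 'r, 'i) formula" "('c, 'r, 'i) formula"

text \<open>Negation respecting the identification of double negations with the formula itself.\<close>
fun fneg :: "('c, 'r, 'i) formula \<Rightarrow> ('c, 'r, 'i) formula" where
  "fneg (FNot \<psi>) = \<psi>"
| "fneg \<psi> = FNot \<psi>"

fun cneg :: "('c, 'r) concept \<Rightarrow> ('c, 'r) concept" where
  "cneg (CNot C) = C"
| "cneg C = CNot C"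

definition FOr :: "('c, 'r, 'i) formula \<Rightarrow> ('c, 'r, 'i) formula \<Rightarrow> ('c, 'r, 'i) formula" where
  "FOr \<psi> \<chi> = fneg (FAnd (fneg \<psi>) (fneg \<chi>))"

fun is_atomic :: "('c, 'r, 'i) formula \<Rightarrow> bool" where
  "is_atomic (FCAss C a) = True"
| "is_atomic (FRAss r a b) = True"
| "is_atomic (FTBox C) = True"
| "is_atomic _ = False"

definition is_literal :: "('c, 'r, 'i) formula \<Rightarrow> bool" where
  "is_literal \<psi> \<longleftrightarrow> is_atomic \<psi> \<or> (\<exists>\<alpha>. \<psi> = FNot \<alpha> \<and> is_atomic \<alpha>)"

fun Conj_list :: "('c, 'r, 'i) formula list \<Rightarrow> ('c, 'r, 'i) formula" where
  "Conj_list [] = undefined"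
| "Conj_list [\<psi>] = \<psi>"
| "Conj_list (\<psi> # xs) = FAnd \<psi> (Conj_list xs)"

record ('d, 'c, 'r, 'i) interp =
  dom  :: "'d set"
  cint :: "'c \<Rightarrow> 'd set"
  rint :: "'r \<Rightarrow> ('d \<times> 'd) set"
  iint :: "'i \<Rightarrow> 'd"

definition wf_interp :: "('d, 'c, 'r, 'i) interp \<Rightarrow> bool" where
  "wf_interp I \<longleftrightarrow> dom I \<noteq> {} \<and> countable (dom I)
     \<and> (\<forall>A. cint I A \<subseteq> dom I) \<and> (\<forall>r. rint I r \<subseteq> dom I \<times> dom I)
     \<and> (\<forall>a. iint I a \<in> dom I)"

fun cext :: "('d, 'c, 'r, 'i) interp \<Rightarrow> ('c, 'r) concept \<Rightarrow> 'd set" where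
  "cext I (CAtom A) = cint I A"
| "cext I (CNot C) = dom I - cext I C"
| "cext I (CAnd C D) = cext I C \<inter> cext I D"
| "cext I (CEx r C) = {x \<in> dom I. \<exists>y. (x, y) \<in> rint I r \<and> y \<in> cext I C}"

fun sat :: "('d, 'c, 'r, 'i) interp \<Rightarrow> ('c, 'r, 'i) formula \<Rightarrow> bool" (infix "\<Turnstile>" 50) where
  "sat I (FCAss C a) = (iint I a \<in> cext I C)"
| "sat I (FRAss r a b) = ((iint I a, iint I b) \<in> rint I r)"
| "sat I (FTBox C) = (cext I C = dom I)"
| "sat I (FNot \<psi>) = (\<not> sat I \<psi>)"
| "sat I (FAnd \<psi> \<chi>) = (sat I \<psi> \<and> sat I \<chi>)"

definition Mod :: "('c, 'r, 'i) formula \<Rightarrow> ('d, 'c, 'r, 'i) interp set" where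
  "Mod \<psi> = {I. wf_interp I \<and> I \<Turnstile> \<psi>}"

definition fequiv :: "('c, 'r, 'i) formula \<Rightarrow> ('c, 'r, 'i) formula \<Rightarrow> 'd itself \<Rightarrow> bool" where
  "fequiv \<psi> \<chi> (_ :: 'd itself) \<longleftrightarrow> (Mod \<psi> :: ('d, 'c, 'r, 'i) interp set) = Mod \<chi>"

fun Sub :: "('c, 'r, 'i) formula \<Rightarrow> ('c, 'r, 'i) formula set" where
  "Sub (FAnd \<psi> \<chi>) = {FAnd \<psi> \<chi>, FNot (FAnd \<psi> \<chi>)} \<union> Sub \<psi> \<union> Sub \<chi>"
| "Sub (FNot \<psi>) = Sub \<psi>"
| "Sub \<alpha> = {\<alpha>, FNot \<alpha>}"

inductive_set con :: "('c, 'r, 'i) formula \<Rightarrow> ('c, 'r) concept set" for \<phi> where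
  tbox: "FTBox C \<in> Sub \<phi> \<Longrightarrow> C \<in> con \<phi>"
| ass: "FCAss C a \<in> Sub \<phi> \<Longrightarrow> C \<in> con \<phi>"
| and1: "CAnd C D \<in> con \<phi> \<Longrightarrow> C \<in> con \<phi>"
| and2: "CAnd C D \<in> con \<phi> \<Longrightarrow> D \<in> con \<phi>"
| ex: "CEx r C \<in> con \<phi> \<Longrightarrow> C \<in> con \<phi>"
| neg: "C \<in> con \<phi> \<Longrightarrow> cneg C \<in> con \<phi>"

definition ctype :: "('c, 'r, 'i) formula \<Rightarrow> ('d, 'c, 'r, 'i) interp \<Rightarrow> 'd \<Rightarrow> ('c, 'r) concept set" where
  "ctype \<phi> I x = {C \<in> con \<phi>. x \<in> cext I C}"

definition qm :: "('c, 'r, 'i) formula \<Rightarrow> ('d, 'c, 'r, 'i) interp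
     \<Rightarrow> ('c, 'r) concept set set \<times> ('i \<Rightarrow> ('c, 'r) concept set) \<times> ('c, 'r, 'i) formula set" where
  "qm \<phi> I = ({ctype \<phi> I x | x. x \<in> dom I}, (\<lambda>a. ctype \<phi> I (iint I a)), {\<psi> \<in> Sub \<phi>. I \<Turnstile> \<psi>})"

definition lit :: "('c, 'r, 'i) formula set \<Rightarrow> ('c, 'r, 'i) formula set" where
  "lit f = {\<psi> \<in> f. is_literal \<psi>}"

definition atoms :: "('c, 'r, 'i) formula \<Rightarrow> ('c, 'r, 'i) formula set" where
  "atoms \<phi> = {\<alpha> \<in> Sub \<phi>. is_atomic \<alpha>}"

inductive_set Llit :: "('c, 'r, 'i) formula \<Rightarrow> ('c, 'r, 'i) formula set" for \<phi> where
  atom: "\<alpha> \<in> atoms \<phi> \<Longrightarrow> \<alpha> \<in> Llit \<phi>"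
| neg: "\<psi> \<in> Llit \<phi> \<Longrightarrow> fneg \<psi> \<in> Llit \<phi>"
| conj: "\<psi> \<in> Llit \<phi> \<Longrightarrow> \<chi> \<in> Llit \<phi> \<Longrightarrow> FAnd \<psi> \<chi> \<in> Llit \<phi>"

definition lit_equiv :: "('c, 'r, 'i) formula \<Rightarrow> ('d, 'c, 'r, 'i) interp \<Rightarrow> ('d, 'c, 'r, 'i) interp \<Rightarrow> bool" where
  "lit_equiv \<phi> M' M \<longleftrightarrow> (\<forall>\<psi> \<in> Llit \<phi>. M' \<Turnstile> \<psi> \<longleftrightarrow> M \<Turnstile> \<psi>)"

definition lit_class :: "('c, 'r, 'i) formula \<Rightarrow> ('d, 'c, 'r, 'i) interp \<Rightarrow> ('d, 'c, 'r, 'i) interp set" where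
  "lit_class \<phi> M = {M'. wf_interp M' \<and> lit_equiv \<phi> M' M}"

end

theory Submission
  imports Defs
begin

lemma sat_fneg[simp]: "sat I (fneg \<psi>) = (\<not> sat I \<psi>)"
  by (cases \<psi>) auto

lemma Sub_fneg[simp]: "Sub (fneg \<phi>) = Sub \<phi>"
  by (cases \<phi>) auto

lemma sat_Conj: "xs \<noteq> [] \<Longrightarrow> sat I (Conj_list xs) = (\<forall>x\<in>set xs. sat I x)"
  by (induction xs rule: Conj_list.induct) auto

lemma Sub_atomic_neg: "is_atomic \<alpha> \<Longrightarrow> (\<alpha> \<in> Sub \<phi> \<longleftrightarrow> FNot \<alpha> \<in> Sub \<phi>)"
  by (induction \<phi>) (cases \<alpha>; auto)+

lemma Sub_has_atom: "\<exists>\<alpha>. is_atomic \<alpha> \<and> \<alpha> \<in> Sub \<phi>"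
proof (induction \<phi>)
  case (FCAss x1 x2) show ?case by (rule exI[of _ "FCAss x1 x2"]) simp
next
  case (FRAss x1 x2 x3) show ?case by (rule exI[of _ "FRAss x1 x2 x3"]) simp
next
  case (FTBox x) show ?case by (rule exI[of _ "FTBox x"]) simp
qed auto

lemma atoms_sub: "\<alpha> \<in> atoms \<phi> \<Longrightarrow> \<alpha> \<in> Llit \<phi>"
  by (rule Llit.atom)

lemma agree_subf:
  assumes "\<forall>\<alpha>\<in>atoms \<phi>. I \<Turnstile> \<alpha> \<longleftrightarrow> M \<Turnstile> \<alpha>"
  shows "atoms \<theta> \<subseteq> atoms \<phi> \<Longrightarrow> I \<Turnstile> \<theta> \<longleftrightarrow> M \<Turnstile> \<theta>"
proof (induction \<theta>)
  case (FCAss x1 x2)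
  have "(FCAss x1 x2) \<in> atoms \<phi>" using FCAss.prems by (auto simp: atoms_def)
  then show ?case using assms by blast
next
  case (FRAss x1 x2 x3)
  have "(FRAss x1 x2 x3) \<in> atoms \<phi>" using FRAss.prems by (auto simp: atoms_def)
  then show ?case using assms by blast
next
  case (FTBox x)
  have "(FTBox x) \<in> atoms \<phi>" using FTBox.prems by (auto simp: atoms_def)
  then show ?case using assms by blast
next
  case (FNot \<theta>)
  then show ?case by (auto simp: atoms_def)
next
  case (FAnd \<theta>1 \<theta>2)
  then show ?case by (auto simp: atoms_def)
qed

lemma agree_Llit:
  assumes "\<forall>\<alpha>\<in>atoms \<phi>. I \<Turnstile> \<alpha> \<longleftrightarrow> M \<Turnstile> \<alpha>"
  shows "\<psi> \<in> Llit \<phi> \<Longrightarrow> I \<Turnstile> \<psi> \<longleftrightarrow> M \<Turnstile> \<psi>"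
  by (induction rule: Llit.induct) (use assms in auto)

lemma lit_equiv_atoms: "lit_equiv \<phi> I M \<Longrightarrow> \<forall>\<alpha>\<in>atoms \<phi>. I \<Turnstile> \<alpha> \<longleftrightarrow> M \<Turnstile> \<alpha>"
  unfolding lit_equiv_def using Llit.atom by blast

theorem mainTheorem6:
  fixes E :: "('c, 'r, 'i) formula \<Rightarrow> ('d, 'c, 'r, 'i) interp \<Rightarrow> ('c, 'r, 'i) formula"
    and \<phi> :: "('c, 'r, 'i) formula"
    and M :: "('d, 'c, 'r, 'i) interp"
  assumes "wf_interp M"
    and "(Mod (E \<phi> M) :: ('d, 'c, 'r, 'i) interp set) = Mod \<phi> \<union> lit_class \<phi> M"
  shows "(M \<Turnstile> \<phi> \<longrightarrow> fequiv (E \<phi> M) \<phi> TYPE('d))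
       \<and> (\<not> M \<Turnstile> \<phi> \<longrightarrow>
           (\<forall>T ob f. qm (fneg \<phi>) M = (T, ob, f) \<longrightarrow>
              (\<forall>xs. set xs = lit f \<longrightarrow>
                  fequiv (E \<phi> M) (FOr \<phi> (Conj_list xs)) TYPE('d))))"
proof (intro conjI impI allI)
  assume sM: "M \<Turnstile> \<phi>"
  have "lit_class \<phi> M \<subseteq> (Mod \<phi> :: ('d, 'c, 'r, 'i) interp set)"
  proof
    fix I :: "('d, 'c, 'r, 'i) interp" assume "I \<in> lit_class \<phi> M"
    hence w: "wf_interp I" and le: "lit_equiv \<phi> I M" by (auto simp: lit_class_def)
    have "I \<Turnstile> \<phi> \<longleftrightarrow> M \<Turnstile> \<phi>" using agree_subf[OF lit_equiv_atoms[OF le]] by blast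
    thus "I \<in> Mod \<phi>" using w sM by (auto simp: Mod_def)
  qed
  thus "fequiv (E \<phi> M) \<phi> TYPE('d)" using assms(2) by (auto simp: fequiv_def)
next
  fix T ob f and xs :: "('c, 'r, 'i) formula list"
  assume nM: "\<not> M \<Turnstile> \<phi>" and q: "qm (fneg \<phi>) M = (T, ob, f)" and xs: "set xs = lit f"
  have f: "f = {\<psi> \<in> Sub \<phi>. M \<Turnstile> \<psi>}" using q by (simp add: qm_def)
  obtain \<alpha> where a: "is_atomic \<alpha>" "\<alpha> \<in> Sub \<phi>" using Sub_has_atom by blast
  have "FNot \<alpha> \<in> Sub \<phi>" using a Sub_atomic_neg by blast
  hence "\<alpha> \<in> lit f \<or> FNot \<alpha> \<in> lit f" using a by (auto simp: f lit_def is_literal_def)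
  hence ne: "xs \<noteq> []" using xs by auto
  have key: "(\<forall>x\<in>set xs. I \<Turnstile> x) \<longleftrightarrow> lit_equiv \<phi> I M" for I :: "('d, 'c, 'r, 'i) interp"
  proof
    assume h: "\<forall>x\<in>set xs. I \<Turnstile> x"
    have "\<forall>\<beta>\<in>atoms \<phi>. I \<Turnstile> \<beta> \<longleftrightarrow> M \<Turnstile> \<beta>"
    proof
      fix \<beta> assume b: "\<beta> \<in> atoms \<phi>"
      hence b1: "is_atomic \<beta>" "\<beta> \<in> Sub \<phi>" by (auto simp: atoms_def)
      hence b2: "FNot \<beta> \<in> Sub \<phi>" using Sub_atomic_neg by blast
      show "I \<Turnstile> \<beta> \<longleftrightarrow> M \<Turnstile> \<beta>"
      proof (cases "M \<Turnstile> \<beta>")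
        case True
        hence "\<beta> \<in> set xs" using b1 by (auto simp: xs f lit_def is_literal_def)
        then show ?thesis using h True by auto
      next
        case False
        hence "FNot \<beta> \<in> set xs" using b1 b2 by (auto simp: xs f lit_def is_literal_def)
        then show ?thesis using h False by fastforce
      qed
    qed
    thus "lit_equiv \<phi> I M" using agree_Llit unfolding lit_equiv_def by blast
  next
    assume le: "lit_equiv \<phi> I M"
    note ag = lit_equiv_atoms[OF le]
    show "\<forall>x\<in>set xs. I \<Turnstile> x"
    proof
      fix x assume "x \<in> set xs"
      hence x: "x \<in> Sub \<phi>" "M \<Turnstile> x" "is_literal x" by (auto simp: xs f lit_def)
      show "I \<Turnstile> x"
      proof (cases "is_atomic x")
        case True
        then show ?thesis using x ag by (auto simp: atoms_def)
      next
        case False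
        then obtain \<beta> where "x = FNot \<beta>" "is_atomic \<beta>" using x(3) by (auto simp: is_literal_def)
        moreover hence "\<beta> \<in> Sub \<phi>" using x(1) Sub_atomic_neg by blast
        ultimately show ?thesis using x ag by (auto simp: atoms_def)
      qed
    qed
  qed
  show "fequiv (E \<phi> M) (FOr \<phi> (Conj_list xs)) TYPE('d)"
    unfolding fequiv_def assms(2)
    using key by (auto simp: Mod_def lit_class_def FOr_def sat_Conj[OF ne])
qed

end
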